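(* Let $G$ be a finite simple graph, $S\subseteq V(G)$, and $t\ge 3$. Suppose $G\setminus S$ is isomorphic to the graph $G_{n,t}$ for some $n\ne 3,5$ with $t>\lceil n/2\rceil$. Then $\mathrm{CF}_t(\mathrm{Cl}(G,S,t))$ is not shellable.
   Context: $G_{n,t}$: start with the complete graph $K_n$ on $y_1,\dots,y_n$; for each $1\le i\le n$ add $t-2$ new vertices $x_{i,1},\dots,x_{i,t-2}$ and make $\{y_i,y_{i+1},x_{i,1},\dots,x_{i,t-2}\}$ a clique (indices of $y$ modulo $n$); there are no other edges. $\mathrm{Cl}(G,S,t)$ is the graph obtained from $G$ by attaching, simultaneously for each $v\in S$, a clique $K_v$ with $v\in V(K_v)$ and $|V(K_v)|\ge t$, whose other vertices are new, with $K_u,K_v$ vertex-disjoint for $u\ne v$. $G\setminus S$ is the induced subgraph on $V(G)\setminus S$. $\mathrm{CF}_t(\cdot)$ is the simplicial complex on the vertex set whose faces are the vertex subsets inducing no $t$-clique. A simplicial complex is shellable if its facets admit an order $F_1,\dots,F_s$ such that for all $i<j$ there exist $v\in F_j\setminus F_i$ and $\ell<j$ with $F_j\setminus F_\ell=\{v\}$. *)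

theory Defs
  imports Main
begin

definition simple_graph :: "'a set \<Rightarrow> 'a set set \<Rightarrow> bool" where
  "simple_graph V E \<longleftrightarrow> finite V \<and> E \<subseteq> {{u, v} | u v. u \<in> V \<and> v \<in> V \<and> u \<noteq> v}"

definition two_sets :: "'a set \<Rightarrow> 'a set set" where
  "two_sets A = {e. e \<subseteq> A \<and> card e = 2}"

definition del_edges :: "'a set \<Rightarrow> 'a set set \<Rightarrow> 'a set set" where
  "del_edges S E = {e \<in> E. e \<inter> S = {}}"

definition graph_iso :: "'a set \<Rightarrow> 'a set set \<Rightarrow> 'b set \<Rightarrow> 'b set set \<Rightarrow> bool" where
  "graph_iso V1 E1 V2 E2 \<longleftrightarrow> (\<exists>f. bij_betw f V1 V2 \<and>
     (\<forall>u\<in>V1. \<forall>v\<in>V1. {u, v} \<in> E1 \<longleftrightarrow> {f u, f v} \<in> E2))"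

text \<open>The graph G_{n,t}: y_i = (i,0) for i<n, x_{i,j} = (i,j) for 1 \<le> j \<le> t-2.\<close>
definition Gnt_block :: "nat \<Rightarrow> nat \<Rightarrow> nat \<Rightarrow> (nat \<times> nat) set" where
  "Gnt_block n t i = {(i, 0), ((i + 1) mod n, 0)} \<union> {(i, j) | j. 1 \<le> j \<and> j \<le> t - 2}"

definition Gnt_V :: "nat \<Rightarrow> nat \<Rightarrow> (nat \<times> nat) set" where
  "Gnt_V n t = {(i, 0) | i. i < n} \<union> {(i, j) | i j. i < n \<and> 1 \<le> j \<and> j \<le> t - 2}"

definition Gnt_E :: "nat \<Rightarrow> nat \<Rightarrow> (nat \<times> nat) set set" where
  "Gnt_E n t = {{(i, 0), (k, 0)} | i k. i < n \<and> k < n \<and> i \<noteq> k}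
              \<union> (\<Union>i<n. two_sets (Gnt_block n t i))"

definition is_Cl :: "'a set \<Rightarrow> 'a set set \<Rightarrow> 'a set \<Rightarrow> nat \<Rightarrow> 'a set \<Rightarrow> 'a set set \<Rightarrow> bool" where
  "is_Cl V E S t V' E' \<longleftrightarrow> (\<exists>K :: 'a \<Rightarrow> 'a set.
     (\<forall>v\<in>S. v \<in> K v \<and> finite (K v) \<and> card (K v) \<ge> t \<and> K v \<inter> V = {v}) \<and>
     (\<forall>u\<in>S. \<forall>v\<in>S. u \<noteq> v \<longrightarrow> K u \<inter> K v = {}) \<and>
     V' = V \<union> (\<Union>v\<in>S. K v) \<and>
     E' = E \<union> (\<Union>v\<in>S. two_sets (K v)))"

definition is_clique :: "'a set set \<Rightarrow> 'a set \<Rightarrow> bool" where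
  "is_clique E A \<longleftrightarrow> (\<forall>u\<in>A. \<forall>v\<in>A. u \<noteq> v \<longrightarrow> {u, v} \<in> E)"

definition CF :: "nat \<Rightarrow> 'a set \<Rightarrow> 'a set set \<Rightarrow> 'a set set" where
  "CF t V E = {A. A \<subseteq> V \<and> \<not> (\<exists>B\<subseteq>A. card B = t \<and> is_clique E B)}"

definition facets :: "'a set set \<Rightarrow> 'a set set" where
  "facets D = {F \<in> D. \<not> (\<exists>G\<in>D. F \<subset> G)}"

definition shellable :: "'a set set \<Rightarrow> bool" where
  "shellable D \<longleftrightarrow> (\<exists>Fs. distinct Fs \<and> set Fs = facets D \<and>
     (\<forall>i j. i < j \<and> j < length Fs \<longrightarrow>
        (\<exists>v \<in> Fs ! j - Fs ! i. \<exists>l < j. Fs ! j - Fs ! l = {v})))"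

end

theory Submission
  imports Defs
begin

definition rho :: "nat \<Rightarrow> nat \<Rightarrow> nat \<Rightarrow> nat" where
  "rho n s c = (2*s + c) mod n"

definition Dset :: "nat \<Rightarrow> nat \<Rightarrow> nat \<Rightarrow> nat set" where
  "Dset n m s = (\<lambda>b. rho n s (2*b)) ` {..<m}"

lemma rho_mod[simp]: "rho n (x mod n) k = rho n x k"
  unfolding rho_def by (metis mod_add_left_eq mod_mult_right_eq)

lemma rho_in: "k < m \<Longrightarrow> rho n a (2*k) \<in> Dset n m a"
  unfolding Dset_def by auto

lemma rho_shift: "rho n x k = (2*x + k) mod n"
  by (simp add: rho_def)

lemma rho_eqI:
  assumes "2*x + k = 2*y + l + j*n"
  shows "rho n x k = rho n y l"
  unfolding rho_shift assms by (rule mod_mult_self1)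

lemma mod_pred: "0 < (n::nat) \<Longrightarrow> ((a mod n) + n - 1) mod n = (a + n - 1) mod n"
proof -
  assume "0 < n"
  then have 1: "(a mod n) + n - 1 = (a mod n) + (n - 1)" by linarith
  from \<open>0 < n\<close> have 2: "a + n - 1 = a + (n - 1)" by linarith
  show ?thesis unfolding 1 2 by (simp add: mod_add_left_eq)
qed


lemma rho_lt: "0 < n \<Longrightarrow> rho n s c < n"
  by (simp add: rho_def)

lemma rho_inj:
  assumes "0 < n" "c < n" "c' < n" "rho n s c = rho n s c'"
  shows "c = c'"
proof -
  have key: "\<And>a b. a \<le> b \<Longrightarrow> b < n \<Longrightarrow> rho n s a = rho n s b \<Longrightarrow> a = b"
  proof -
    fix a b assume ab: "a \<le> b" "b < n" "rho n s a = rho n s b"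
    then have "(2*s+a) mod n = (2*s+b) mod n" by (simp add: rho_def)
    then have "n dvd ((2*s+b) - (2*s+a))" using ab mod_eq_dvd_iff_nat[of "2*s+a" "2*s+b" n] by simp
    then have "n dvd (b - a)" by simp
    moreover have "b - a < n" using ab by simp
    ultimately show "a = b" using ab(1) by (metis dvd_imp_le le_antisym not_less diff_is_0_eq' zero_less_diff)
  qed
  show ?thesis
  proof (cases "c \<le> c'")
    case True then show ?thesis using key assms by blast
  next
    case False then show ?thesis using key[of c' c] assms by simp
  qed
qed

lemma rho_surj:
  assumes "0 < n" "j < n"
  shows "\<exists>c<n. j = rho n s c"
proof -
  define c where "c = (j + n - (2*s) mod n) mod n"
  have lt: "(2*s) mod n < n" using assms by simp
  have e1: "2*s + (j + n - (2*s) mod n) = (j + n) + (2*s div n) * n"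
    using lt div_mult_mod_eq[of "2*s" n] by arith
  have "rho n s c = (2*s + (j + n - (2*s) mod n)) mod n"
    unfolding rho_def c_def by (rule mod_add_right_eq)
  also have "\<dots> = j" unfolding e1 mod_mult_self1 using assms by simp
  finally have "rho n s c = j" .
  moreover have "c < n" using assms by (simp add: c_def)
  ultimately show ?thesis by metis
qed

lemma rho_Suc: "(rho n s c + 1) mod n = rho n s (c+1)"
  unfolding rho_def by (metis add.assoc mod_add_left_eq)

lemma rho_pred: "0 < n \<Longrightarrow> (rho n s c + n - 1) mod n = rho n s (c + n - 1)"
  unfolding rho_def using mod_pred[of n "2*s+c"] by (simp add: add.assoc)

lemma rho_n: "rho n s (c + n) = rho n s c"
  unfolding rho_def by (simp add: add.assoc[symmetric])

lemma D_mem: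
  assumes "0 < n" "2*m \<le> n" "c < n"
  shows "rho n s c \<in> Dset n m s \<longleftrightarrow> (even c \<and> c < 2*m)"
proof
  assume "rho n s c \<in> Dset n m s"
  then obtain b where b: "b < m" "rho n s c = rho n s (2*b)" unfolding Dset_def by auto
  then have "c = 2*b" using rho_inj[of n c "2*b" s] assms by simp
  then show "even c \<and> c < 2*m" using b by simp
next
  assume "even c \<and> c < 2*m"
  then obtain b where "c = 2*b" "b < m" by (auto elim!: evenE)
  then show "rho n s c \<in> Dset n m s" using rho_in by simp
qed

lemma D_sub: "0 < n \<Longrightarrow> Dset n m s \<subseteq> {..<n}"
  unfolding Dset_def using rho_lt by auto

lemma D_card: "card (Dset n m s) \<le> m"
  unfolding Dset_def using card_image_le[of "{..<m}"] by simp

lemma D_inj: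
  assumes n: "n = 2*m+1" and r: "r < n" and s: "s < n" and eq: "Dset n m r = Dset n m s" and m1: "m \<ge> 1"
  shows "r = s"
proof -
  have npos: "0 < n" using n by simp
  have "rho n r (2*0) \<in> Dset n m s" using eq rho_in[of 0 m n r] m1 by simp
  then obtain b where b: "b < m" "rho n r 0 = rho n s (2*b)" unfolding Dset_def by auto
  have "rho n s (2*0) \<in> Dset n m r" using eq rho_in[of 0 m n s] m1 by simp
  then obtain b' where b': "b' < m" "rho n s 0 = rho n r (2*b')" unfolding Dset_def by auto
  have "(2*r + (2*b+2*b')) mod n = ((2*r + 2*b') mod n + 2*b) mod n"
    unfolding mod_add_left_eq by (simp add: algebra_simps)
  also have "\<dots> = ((2*s) mod n + 2*b) mod n" using b' by (simp add: rho_def)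
  also have "\<dots> = (2*s + 2*b) mod n" by (simp add: mod_add_left_eq)
  also have "\<dots> = (2*r) mod n" using b by (simp add: rho_def)
  finally have "n dvd (2*b+2*b')" using mod_eq_dvd_iff_nat[of "2*r" "2*r + (2*b+2*b')" n] by simp
  then obtain q where q: "2*b+2*b' = n*q" by (auto elim: dvdE)
  have "q < 2" proof (rule ccontr)
    assume "\<not> q < 2" then have "n*q \<ge> n*2" by simp
    then show False using q b b' n by simp
  qed
  moreover have "q \<noteq> 1"
  proof
    assume "q = 1" then have "2*(b+b') = 2*m+1" using q n by simp
    then show False by presburger
  qed
  ultimately have "q = 0" by simp
  then have "b = 0" using q by simp
  then have rs: "(2*r) mod n = (2*s) mod n" using b by (simp add: rho_def)
  have cop: "coprime n 2" using n by (simp add: coprime_right_2_iff_odd)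
  have key: "\<And>a c. a < n \<Longrightarrow> c < n \<Longrightarrow> a \<le> c \<Longrightarrow> (2*a) mod n = (2*c) mod n \<Longrightarrow> a = c"
  proof -
    fix a c assume ac: "a < n" "c < n" "a \<le> c" "(2*a) mod n = (2*c) mod n"
    then have "n dvd (2*c - 2*a)" using mod_eq_dvd_iff_nat[of "2*a" "2*c" n] by simp
    then have "n dvd 2*(c - a)" by (simp add: diff_mult_distrib2)
    then have "n dvd (c - a)" using cop coprime_dvd_mult_right_iff by blast
    moreover have "c - a < n" using ac by simp
    ultimately show "a = c" using ac(3) by (metis dvd_imp_le le_antisym not_less diff_is_0_eq' zero_less_diff)
  qed
  show ?thesis
  proof (cases "r \<le> s")
    case True then show ?thesis using key r s rs by blast
  next
    case False then show ?thesis using key[of s r] r s rs by simp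
  qed
qed

lemma arc_core:
  fixes pos :: "nat \<Rightarrow> nat"
  assumes n: "n = 2*m+1" and m3: "m \<ge> 3"
    and inj: "inj_on pos {..<n}"
    and s0: "s0 < n" "\<forall>s<n. pos s0 \<le> pos s"
    and cons: "\<And>r s. r < n \<Longrightarrow> s < n \<Longrightarrow> pos r < pos s \<Longrightarrow>
       (rho n s 0 \<notin> Dset n m r \<and> pos ((s+1) mod n) < pos s) \<or>
       (rho n s (2*m-2) \<notin> Dset n m r \<and> pos ((s+n-1) mod n) < pos s)"
  shows False
proof -
  have npos: "n > 0" using n by simp
  define c where "c = (s0+m) mod n"
  define d where "d = (s0+m+1) mod n"
  have lt: "c < n" "d < n" using npos by (auto simp: c_def d_def)
  have dist: "\<And>a b. a < n \<Longrightarrow> b < n \<Longrightarrow> a \<noteq> b \<Longrightarrow> pos a \<noteq> pos b"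
    using inj by (auto simp: inj_on_def)
  have first: "\<And>s. s < n \<Longrightarrow> s \<noteq> s0 \<Longrightarrow> pos s0 < pos s"
  proof -
    fix s assume "s < n" "s \<noteq> s0"
    then have "pos s0 \<le> pos s" "pos s0 \<noteq> pos s" using s0 dist[of s0 s] by auto
    then show "pos s0 < pos s" by simp
  qed
  have modne: "\<And>a b. a < b \<Longrightarrow> b < a + n \<Longrightarrow> a mod n \<noteq> b mod n"
  proof -
    fix a b :: nat assume ab: "a < b" "b < a + n"
    show "a mod n \<noteq> b mod n"
    proof
      assume "a mod n = b mod n"
      then have "n dvd (b - a)" using ab mod_eq_dvd_iff_nat[of a b n] by simp
      moreover have "0 < b - a" "b - a < n" using ab by auto
      ultimately show False using dvd_imp_le by fastforce
    qed
  qed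
  have cd: "c \<noteq> d" unfolding c_def d_def using modne[of "s0+m" "s0+m+1"] n m3 by simp
  show False
  proof (cases "pos c < pos d")
    case True
    define e where "e = (s0+m+2) mod n"
    define p1 where "p1 = (s0+n-1) mod n"
    define p2 where "p2 = (s0+n-2) mod n"
    have lt2: "e < n" "p1 < n" "p2 < n" using npos by (auto simp: e_def p1_def p2_def)
    have ec: "e \<noteq> c" unfolding c_def e_def using modne[of "s0+m" "s0+m+2"] n m3 by simp
    have p1d: "p1 \<noteq> d" unfolding p1_def d_def using modne[of "s0+m+1" "s0+n-1"] n m3 by simp
    have p2s0: "p2 \<noteq> s0"
    proof -
      have "(s0+n) mod n = s0" using s0(1) by simp
      moreover have "(s0+n-2) mod n \<noteq> (s0+n) mod n" using modne[of "s0+n-2" "s0+n"] n m3 by simp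
      ultimately show ?thesis by (simp add: p2_def)
    qed
    have c1: "(c+1) mod n = d" unfolding c_def d_def by (simp add: mod_simps)
    have e1: "(e+n-1) mod n = d"
    proof -
      have "(e+n-1) mod n = (s0+m+2+n-1) mod n" unfolding e_def
        using mod_pred[OF npos] by blast
      also have "s0+m+2+n-1 = (s0+m+1) + n" by simp
      also have "((s0+m+1) + n) mod n = (s0+m+1) mod n" by (rule mod_add_self2)
      finally show ?thesis by (simp add: d_def)
    qed
    have d1: "(d+1) mod n = e" unfolding e_def d_def by (simp add: mod_simps)
    have pp: "(p1+n-1) mod n = p2"
    proof -
      have "(p1+n-1) mod n = (s0+n-1+n-1) mod n" unfolding p1_def
        using mod_pred[OF npos] by blast
      also have "s0+n-1+n-1 = (s0+n-2) + n" using n m3 by simp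
      also have "((s0+n-2) + n) mod n = (s0+n-2) mod n" by (rule mod_add_self2)
      finally show ?thesis by (simp add: p2_def)
    qed
    have pp2: "(p2+1) mod n = p1"
    proof -
      have "(p2+1) mod n = (s0+n-2+1) mod n" unfolding p2_def by (rule mod_add_left_eq)
      also have "s0+n-2+1 = s0+n-1" using n m3 by simp
      finally show ?thesis by (simp add: p1_def)
    qed
    have i1: "pos c < pos e"
    proof (rule ccontr)
      assume "\<not> pos c < pos e"
      then have "pos e < pos c" using dist[OF lt(1) lt2(1)] ec by linarith
      from cons[OF lt2(1) lt(1) this] True c1
      have "rho n c (2*m-2) \<notin> Dset n m e" by auto
      moreover have "rho n c (2*m-2) = rho n e (2*(m-3))"
        unfolding c_def e_def rho_mod by (rule rho_eqI[where j=0]) (use m3 in simp)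
      moreover have "rho n e (2*(m-3)) \<in> Dset n m e" by (rule rho_in) (use m3 in simp)
      ultimately show False by simp
    qed
    have i2: "pos d < pos e"
    proof -
      have "rho n e 0 = rho n c (2*2)"
        unfolding c_def e_def rho_mod by (rule rho_eqI[where j=0]) simp
      moreover have "rho n c (2*2) \<in> Dset n m c" by (rule rho_in) (use m3 in simp)
      ultimately show ?thesis using cons[OF lt(1) lt2(1) i1] e1 by auto
    qed
    have i3: "pos d < pos p1"
    proof (rule ccontr)
      assume "\<not> pos d < pos p1"
      then have "pos p1 < pos d" using dist[OF lt(2) lt2(2)] p1d by linarith
      from cons[OF lt2(2) lt(2) this] i2 d1
      have "rho n d (2*m-2) \<notin> Dset n m p1" by auto
      moreover have "rho n d (2*m-2) = rho n p1 (2*0)"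
        unfolding d_def p1_def rho_mod by (rule rho_eqI[where j=0]) (use m3 n in simp)
      moreover have "rho n p1 (2*0) \<in> Dset n m p1" by (rule rho_in) (use m3 in simp)
      ultimately show False by simp
    qed
    have i4: "pos p2 < pos p1"
    proof -
      have "rho n p1 0 = rho n d (2*(m-1))"
        unfolding d_def p1_def rho_mod by (rule rho_eqI[where j=0]) (use m3 n in simp)
      moreover have "rho n d (2*(m-1)) \<in> Dset n m d" by (rule rho_in) (use m3 in simp)
      ultimately show ?thesis using cons[OF lt(2) lt2(2) i3] pp by auto
    qed
    have i5: "pos p1 < pos p2"
    proof -
      have "rho n p2 (2*m-2) = rho n s0 (2*(m-3))"
        unfolding p2_def rho_mod by (rule rho_eqI[where j=2]) (use m3 n in simp)
      moreover have "rho n s0 (2*(m-3)) \<in> Dset n m s0" by (rule rho_in) (use m3 in simp)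
      ultimately show ?thesis using cons[OF s0(1) lt2(3) first[OF lt2(3) p2s0]] pp2 by auto
    qed
    show False using i4 i5 by simp
  next
    case False
    then have dc: "pos d < pos c" using dist[OF lt] cd by linarith
    define f where "f = (s0+m-1) mod n"
    define q1 where "q1 = (s0+1) mod n"
    define q2 where "q2 = (s0+2) mod n"
    have lt2: "f < n" "q1 < n" "q2 < n" using npos by (auto simp: f_def q1_def q2_def)
    have fd: "f \<noteq> d" unfolding f_def d_def using modne[of "s0+m-1" "s0+m+1"] n m3 by simp
    have q1c: "q1 \<noteq> c" unfolding q1_def c_def using modne[of "s0+1" "s0+m"] n m3 by simp
    have q2s0: "q2 \<noteq> s0"
    proof -
      have "s0 mod n = s0" using s0(1) by simp
      moreover have "s0 mod n \<noteq> (s0+2) mod n" using modne[of "s0" "s0+2"] n m3 by simp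
      ultimately show ?thesis by (simp add: q2_def)
    qed
    have d1: "(d+n-1) mod n = c"
    proof -
      have "(d+n-1) mod n = (s0+m+1+n-1) mod n" unfolding d_def
        using mod_pred[OF npos] by blast
      also have "s0+m+1+n-1 = (s0+m) + n" by simp
      also have "((s0+m) + n) mod n = (s0+m) mod n" by (rule mod_add_self2)
      finally show ?thesis by (simp add: c_def)
    qed
    have f1: "(f+1) mod n = c" unfolding f_def c_def using m3
      by (simp add: mod_simps)
    have c1: "(c+n-1) mod n = f"
    proof -
      have "(c+n-1) mod n = (s0+m+n-1) mod n" unfolding c_def
        using mod_pred[OF npos] by blast
      also have "s0+m+n-1 = (s0+m-1) + n" using m3 by simp
      also have "((s0+m-1) + n) mod n = (s0+m-1) mod n" by (rule mod_add_self2)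
      finally show ?thesis by (simp add: f_def)
    qed
    have q11: "(q1+1) mod n = q2" unfolding q1_def q2_def by (simp add: mod_simps)
    have q21: "(q2+n-1) mod n = q1"
    proof -
      have "(q2+n-1) mod n = (s0+2+n-1) mod n" unfolding q2_def
        using mod_pred[OF npos] by blast
      also have "s0+2+n-1 = (s0+1) + n" using n by simp
      also have "((s0+1) + n) mod n = (s0+1) mod n" by (rule mod_add_self2)
      finally show ?thesis by (simp add: q1_def)
    qed
    have i1: "pos d < pos f"
    proof (rule ccontr)
      assume "\<not> pos d < pos f"
      then have "pos f < pos d" using dist[OF lt(2) lt2(1)] fd by linarith
      from cons[OF lt2(1) lt(2) this] dc d1
      have "rho n d 0 \<notin> Dset n m f" by auto
      moreover have "rho n d 0 = rho n f (2*2)"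
        unfolding d_def f_def rho_mod by (rule rho_eqI[where j=0]) (use m3 in simp)
      moreover have "rho n f (2*2) \<in> Dset n m f" by (rule rho_in) (use m3 in simp)
      ultimately show False by simp
    qed
    have i2: "pos c < pos f"
    proof -
      have "rho n f (2*m-2) = rho n d (2*(m-3))"
        unfolding d_def f_def rho_mod by (rule rho_eqI[where j=0]) (use m3 in simp)
      moreover have "rho n d (2*(m-3)) \<in> Dset n m d" by (rule rho_in) (use m3 in simp)
      ultimately show ?thesis using cons[OF lt(2) lt2(1) i1] f1 by auto
    qed
    have i3: "pos c < pos q1"
    proof (rule ccontr)
      assume "\<not> pos c < pos q1"
      then have "pos q1 < pos c" using dist[OF lt(1) lt2(2)] q1c by linarith
      from cons[OF lt2(2) lt(1) this] i2 c1
      have "rho n c 0 \<notin> Dset n m q1" by auto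
      moreover have "rho n c 0 = rho n q1 (2*(m-1))"
        unfolding c_def q1_def rho_mod by (rule rho_eqI[where j=0]) (use m3 in simp)
      moreover have "rho n q1 (2*(m-1)) \<in> Dset n m q1" by (rule rho_in) (use m3 in simp)
      ultimately show False by simp
    qed
    have i4: "pos q2 < pos q1"
    proof -
      have "rho n q1 (2*m-2) = rho n c (2*0)"
        unfolding c_def q1_def rho_mod by (rule rho_eqI[where j=0]) (use m3 in simp)
      moreover have "rho n c (2*0) \<in> Dset n m c" by (rule rho_in) (use m3 in simp)
      ultimately show ?thesis using cons[OF lt(1) lt2(2) i3] q11 by auto
    qed
    have i5: "pos q1 < pos q2"
    proof -
      have "rho n q2 0 = rho n s0 (2*2)"
        unfolding q2_def rho_mod by (rule rho_eqI[where j=0]) simp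
      moreover have "rho n s0 (2*2) \<in> Dset n m s0" by (rule rho_in) (use m3 in simp)
      ultimately show ?thesis using cons[OF s0(1) lt2(3) first[OF lt2(3) q2s0]] q21 by auto
    qed
    show False using i4 i5 by simp
  qed
qed

locale clset =
  fixes V :: "'a set" and E :: "'a set set" and S :: "'a set" and t n :: nat
    and V' :: "'a set" and E' :: "'a set set" and K :: "'a \<Rightarrow> 'a set"
    and f :: "'a \<Rightarrow> nat \<times> nat" and A :: "'a \<Rightarrow> 'a set"
  assumes sg: "simple_graph V E" and SV: "S \<subseteq> V" and t3: "t \<ge> 3" and n3: "n \<ge> 3"
    and bij: "bij_betw f (V - S) (Gnt_V n t)"
    and iso: "\<forall>u\<in>V-S. \<forall>v\<in>V-S. {u,v} \<in> del_edges S E \<longleftrightarrow> {f u, f v} \<in> Gnt_E n t"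
    and K1: "\<forall>v\<in>S. v \<in> K v \<and> finite (K v) \<and> card (K v) \<ge> t \<and> K v \<inter> V = {v}"
    and K2: "\<forall>u\<in>S. \<forall>v\<in>S. u \<noteq> v \<longrightarrow> K u \<inter> K v = {}"
    and V'def: "V' = V \<union> (\<Union>v\<in>S. K v)"
    and E'def: "E' = E \<union> (\<Union>v\<in>S. two_sets (K v))"
    and A1: "\<forall>v\<in>S. A v \<subseteq> K v - {v} \<and> card (A v) = t - 1"
begin

definition g where "g = inv_into (V - S) f"
definition y where "y j = g (j, 0)"
definition XI where "XI = {(i,j) | i j. i < n \<and> 1 \<le> j \<and> j \<le> t - 2}"
definition Xs where "Xs = g ` XI"
definition sig where "sig = (\<Union>v\<in>S. A v) \<union> Xs"
definition M where "M J = sig \<union> y ` J"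
definition Dl where "Dl = CF t V' E'"

lemma npos: "0 < n" using n3 by simp

lemma gV: "p \<in> Gnt_V n t \<Longrightarrow> g p \<in> V - S \<and> f (g p) = p"
  unfolding g_def using bij bij_betw_inv_into_right inv_into_into bij_betw_def by metis

lemma fV: "z \<in> V - S \<Longrightarrow> f z \<in> Gnt_V n t \<and> g (f z) = z"
  unfolding g_def using bij bij_betw_inv_into_left bij_betw_apply by metis

lemma g_inj: "inj_on g (Gnt_V n t)"
  by (metis gV inj_onI)

lemma y_Gnt: "j < n \<Longrightarrow> (j, 0) \<in> Gnt_V n t"
  unfolding Gnt_V_def by auto

lemma XI_Gnt: "XI \<subseteq> Gnt_V n t"
  unfolding Gnt_V_def XI_def by auto

lemma y_VS: "j < n \<Longrightarrow> y j \<in> V - S"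
  unfolding y_def using gV y_Gnt by blast

lemma f_y: "j < n \<Longrightarrow> f (y j) = (j, 0)"
  unfolding y_def using gV y_Gnt by blast

lemma y_inj: "i < n \<Longrightarrow> j < n \<Longrightarrow> y i = y j \<Longrightarrow> i = j"
  by (metis f_y prod.inject)

lemma Xs_VS: "Xs \<subseteq> V - S"
  unfolding Xs_def using gV XI_Gnt by blast

lemma f_Xs: "z \<in> Xs \<Longrightarrow> f z \<in> XI"
  unfolding Xs_def using gV XI_Gnt by auto

lemma A_V: "v \<in> S \<Longrightarrow> A v \<inter> V = {}"
  using A1 K1 by blast

lemma A_K: "v \<in> S \<Longrightarrow> A v \<subseteq> K v"
  using A1 by blast

lemma A_fin: "v \<in> S \<Longrightarrow> finite (A v)"
  using A1 K1 by (meson finite_Diff finite_subset)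

lemma A_card: "v \<in> S \<Longrightarrow> card (A v) = t - 1"
  using A1 by blast

lemma K_V: "v \<in> S \<Longrightarrow> K v \<inter> V = {v}"
  using K1 by blast

lemma K_VS: "v \<in> S \<Longrightarrow> K v \<inter> (V - S) = {}"
proof -
  assume v: "v \<in> S"
  have "K v \<inter> V = {v}" using K_V[OF v] .
  then show ?thesis using v by auto
qed

lemma y_notsig: "j < n \<Longrightarrow> y j \<notin> sig"
proof
  assume j: "j < n" and "y j \<in> sig"
  then consider (a) v where "v \<in> S" "y j \<in> A v" | (b) "y j \<in> Xs" unfolding sig_def by blast
  then show False
  proof cases
    case a then show ?thesis using A_V y_VS[OF j] by blast
  next
    case b then have "f (y j) \<in> XI" by (rule f_Xs)
    then show ?thesis using f_y[OF j] unfolding XI_def by auto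
  qed
qed

lemma sig_V': "sig \<subseteq> V'"
  unfolding sig_def V'def using A_K Xs_VS by blast

lemma y_V': "j < n \<Longrightarrow> y j \<in> V'"
  unfolding V'def using y_VS by blast

lemma M_V': "J \<subseteq> {..<n} \<Longrightarrow> M J \<subseteq> V'"
  unfolding M_def using sig_V' y_V' by blast

lemma M_inj: "J \<subseteq> {..<n} \<Longrightarrow> J' \<subseteq> {..<n} \<Longrightarrow> M J = M J' \<Longrightarrow> J = J'"
proof -
  assume J: "J \<subseteq> {..<n}" and J': "J' \<subseteq> {..<n}" and eq: "M J = M J'"
  have "\<And>j J J'. J \<subseteq> {..<n} \<Longrightarrow> J' \<subseteq> {..<n} \<Longrightarrow> M J = M J' \<Longrightarrow> j \<in> J \<Longrightarrow> j \<in> J'"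
  proof -
    fix j J J' assume J: "J \<subseteq> {..<n}" and J': "J' \<subseteq> {..<n}" and eq: "M J = M J'" and jJ: "j \<in> J"
    then have jn: "j < n" by auto
    have "y j \<in> M J'" using eq jJ unfolding M_def by blast
    then have "y j \<in> y ` J'" using y_notsig[OF jn] unfolding M_def by blast
    then obtain j' where "j' \<in> J'" "y j = y j'" by blast
    then show "j \<in> J'" using y_inj[OF jn] J' by auto
  qed
  then show ?thesis using J J' eq by blast
qed

lemma E_V: "e \<in> E \<Longrightarrow> e \<subseteq> V"
  using sg unfolding simple_graph_def by blast

lemma edge_VS:
  assumes "a \<in> V - S" "b \<in> V - S" "{a,b} \<in> E'"
  shows "{f a, f b} \<in> Gnt_E n t"
proof -
  have "{a,b} \<in> E"
  proof (rule ccontr)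
    assume "{a,b} \<notin> E"
    then obtain v where "v \<in> S" "{a,b} \<in> two_sets (K v)" using assms(3) unfolding E'def by blast
    then have "a \<in> K v" unfolding two_sets_def by blast
    then show False using K_VS \<open>v \<in> S\<close> assms(1) by blast
  qed
  then have "{a,b} \<in> del_edges S E" unfolding del_edges_def using assms by blast
  then show ?thesis using iso assms by blast
qed

lemma edge_G:
  assumes "p \<in> Gnt_V n t" "q \<in> Gnt_V n t" "{p,q} \<in> Gnt_E n t"
  shows "{g p, g q} \<in> E'"
proof -
  have "g p \<in> V - S" "g q \<in> V - S" "f (g p) = p" "f (g q) = q" using gV assms by auto
  then have "{g p, g q} \<in> del_edges S E" using iso assms(3) by auto
  then show ?thesis unfolding del_edges_def E'def by blast
qed

lemma edge_new:
  assumes v: "v \<in> S" and a: "a \<in> A v" and e: "{a,b} \<in> E'"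
  shows "b \<in> K v"
proof -
  have "a \<notin> V" using A_V v a by blast
  then have "{a,b} \<notin> E" using E_V by blast
  then obtain u where u: "u \<in> S" "{a,b} \<in> two_sets (K u)" using e unfolding E'def by blast
  then have ab: "a \<in> K u" "b \<in> K u" unfolding two_sets_def by auto
  have "a \<in> K v" using A_K v a by blast
  then have "u = v" using K2 u(1) v ab(1) by blast
  then show ?thesis using ab by simp
qed

lemma K_clique: "v \<in> S \<Longrightarrow> B \<subseteq> K v \<Longrightarrow> is_clique E' B"
  unfolding is_clique_def E'def two_sets_def by (auto simp: card_insert_if)

lemma CF_down: "G \<in> Dl \<Longrightarrow> H \<subseteq> G \<Longrightarrow> H \<in> Dl"
  unfolding Dl_def CF_def by blast

lemma block_Gnt: "i < n \<Longrightarrow> Gnt_block n t i \<subseteq> Gnt_V n t"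
  unfolding Gnt_block_def Gnt_V_def using npos by auto

lemma block_card: "i < n \<Longrightarrow> card (Gnt_block n t i) = t"
proof -
  assume i: "i < n"
  define Xp where "Xp = (\<lambda>j. (i,j)) ` {1..t-2}"
  have "Gnt_block n t i = insert (i,0) (insert ((i+1) mod n, 0) Xp)"
    unfolding Gnt_block_def Xp_def by auto
  moreover have "card Xp = t - 2" unfolding Xp_def by (simp add: card_image inj_on_def)
  moreover have "(i,0) \<notin> Xp" "((i+1) mod n, 0) \<notin> Xp" unfolding Xp_def by auto
  moreover have "(i,0) \<noteq> ((i+1) mod n, (0::nat))"
  proof
    assume "(i,0) = ((i+1) mod n, (0::nat))"
    then have "i = (i+1) mod n" by simp
    moreover have "(i+1) mod n = (if i + 1 = n then 0 else i+1)" using i by (simp add: mod_if)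
    ultimately show False using n3 by (auto split: if_splits)
  qed
  moreover have "finite Xp" unfolding Xp_def by simp
  ultimately show ?thesis using t3 by simp
qed

lemma block_edge: "p \<in> Gnt_block n t i \<Longrightarrow> q \<in> Gnt_block n t i \<Longrightarrow> i < n \<Longrightarrow> p \<noteq> q \<Longrightarrow> {p,q} \<in> Gnt_E n t"
  unfolding Gnt_E_def two_sets_def by (auto simp: card_insert_if)

lemma x_edge:
  assumes "{(i,j), z} \<in> Gnt_E n t" "j \<ge> 1"
  shows "z \<in> Gnt_block n t i"
proof -
  from assms(1) consider (a) "{(i,j), z} \<in> {{(i', 0), (k, 0)} | i' k. i' < n \<and> k < n \<and> i' \<noteq> k}"
    | (b) i' where "i' < n" "{(i,j), z} \<in> two_sets (Gnt_block n t i')"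
    unfolding Gnt_E_def by blast
  then show ?thesis
  proof cases
    case a then show ?thesis using assms(2) by (auto simp: doubleton_eq_iff)
  next
    case b
    then have "(i,j) \<in> Gnt_block n t i'" "z \<in> Gnt_block n t i'" unfolding two_sets_def by auto
    moreover from this(1) have "i' = i" using assms(2) unfolding Gnt_block_def by auto
    ultimately show ?thesis by simp
  qed
qed

end

context clset begin

lemma consec_nonface:
  assumes G: "G \<in> Dl" and i: "i < n" and X: "Xs \<subseteq> G" and y1: "y i \<in> G" and y2: "y ((i+1) mod n) \<in> G"
  shows False
proof -
  define B where "B = g ` Gnt_block n t i"
  have sub: "Gnt_block n t i \<subseteq> Gnt_V n t" using block_Gnt[OF i] .
  have "card B = t" unfolding B_def using card_image[OF inj_on_subset[OF g_inj sub]] block_card[OF i] by simp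
  moreover have "B \<subseteq> G"
  proof
    fix z assume "z \<in> B"
    then obtain p where p: "p \<in> Gnt_block n t i" "z = g p" unfolding B_def by blast
    then consider "p = (i,0)" | "p = ((i+1) mod n, 0)" | j where "p = (i,j)" "1 \<le> j" "j \<le> t - 2"
      unfolding Gnt_block_def by blast
    then show "z \<in> G"
    proof cases
      case 1 then show ?thesis using p y1 by (simp add: y_def)
    next
      case 2 then show ?thesis using p y2 by (simp add: y_def)
    next
      case 3 then have "p \<in> XI" unfolding XI_def using i by blast
      then show ?thesis using p X unfolding Xs_def by blast
    qed
  qed
  moreover have "is_clique E' B"
    unfolding is_clique_def
  proof (intro ballI impI)
    fix u w assume "u \<in> B" "w \<in> B" "u \<noteq> w"
    then obtain p q where pq: "p \<in> Gnt_block n t i" "q \<in> Gnt_block n t i" "u = g p" "w = g q"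
      unfolding B_def by blast
    then have "p \<noteq> q" using \<open>u \<noteq> w\<close> by blast
    then have "{p,q} \<in> Gnt_E n t" using block_edge pq i by blast
    then show "{u,w} \<in> E'" using edge_G pq sub by blast
  qed
  ultimately show False using G unfolding Dl_def CF_def by blast
qed

lemma support:
  assumes G: "G \<in> Dl" and sG: "sig \<subseteq> G"
  shows "G \<subseteq> sig \<union> y ` {..<n}"
proof
  fix z assume zG: "z \<in> G"
  have Kcase: "z \<in> sig" if v: "v \<in> S" and zK: "z \<in> K v" for v
  proof (rule ccontr)
    assume zs: "z \<notin> sig"
    then have za: "z \<notin> A v" unfolding sig_def using v by blast
    define B where "B = insert z (A v)"
    have "card B = t" unfolding B_def using za A_fin[OF v] A_card[OF v] t3 by simp
    moreover have "B \<subseteq> G" unfolding B_def using zG sG v unfolding sig_def by blast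
    moreover have "is_clique E' B" using K_clique[OF v] zK A_K[OF v] unfolding B_def by blast
    ultimately show False using G unfolding Dl_def CF_def by blast
  qed
  have "z \<in> V'" using G zG unfolding Dl_def CF_def by blast
  then consider (a) "z \<in> V - S" | (b) "z \<in> S" | (c) v where "v \<in> S" "z \<in> K v"
    unfolding V'def by blast
  then show "z \<in> sig \<union> y ` {..<n}"
  proof cases
    case a
    then have fz: "f z \<in> Gnt_V n t" "g (f z) = z" using fV by auto
    obtain i j where ij: "f z = (i,j)" by (cases "f z")
    show ?thesis
    proof (cases "j = 0")
      case True
      then have "i < n" using fz ij unfolding Gnt_V_def by auto
      moreover have "z = y i" using fz ij True by (simp add: y_def)
      ultimately show ?thesis by blast
    next
      case False
      then have "(i,j) \<in> XI" using fz ij unfolding Gnt_V_def XI_def by auto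
      then have "z \<in> Xs" using fz ij unfolding Xs_def by (metis image_eqI)
      then show ?thesis unfolding sig_def by blast
    qed
  next
    case b
    then have "z \<in> K z" using K1 by blast
    then show ?thesis using Kcase b by blast
  next
    case c then show ?thesis using Kcase by blast
  qed
qed

lemma face:
  assumes J: "J \<subseteq> {..<n}" and cJ: "card J < t" and nc: "\<And>i. i \<in> J \<Longrightarrow> (i+1) mod n \<notin> J"
  shows "M J \<in> Dl"
proof -
  have "\<not> (\<exists>B\<subseteq>M J. card B = t \<and> is_clique E' B)"
  proof
    assume "\<exists>B\<subseteq>M J. card B = t \<and> is_clique E' B"
    then obtain B where B: "B \<subseteq> M J" "card B = t" "is_clique E' B" by blast
    have "0 < card B" using B(2) t3 by simp
    then have finB: "finite B" by (rule card_ge_0_finite)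
    show False
    proof (cases "\<exists>v\<in>S. B \<inter> A v \<noteq> {}")
      case True
      then obtain v a where v: "v \<in> S" "a \<in> B" "a \<in> A v" by blast
      have BK: "B \<subseteq> K v"
      proof
        fix b assume "b \<in> B"
        show "b \<in> K v"
        proof (cases "b = a")
          case True then show ?thesis using v A_K by blast
        next
          case False
          then have "{a,b} \<in> E'" using B(3) v(2) \<open>b \<in> B\<close> unfolding is_clique_def by metis
          then show ?thesis using edge_new v by blast
        qed
      qed
      have "B \<subseteq> A v"
      proof
        fix b assume bB: "b \<in> B"
        then have bK: "b \<in> K v" using BK by blast
        have "b \<in> M J" using bB B(1) by blast
        then consider (1) w where "w \<in> S" "b \<in> A w" | (2) "b \<in> Xs" | (3) "b \<in> y ` J"
          unfolding M_def sig_def by blast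
        then show "b \<in> A v"
        proof cases
          case 1
          then have "w = v" using K2 A_K bK v(1) by blast
          then show ?thesis using 1 by simp
        next
          case 2 then show ?thesis using Xs_VS K_VS[OF v(1)] bK by blast
        next
          case 3 then show ?thesis using y_VS J K_VS[OF v(1)] bK by blast
        qed
      qed
      then have "card B \<le> t - 1" using A_card[OF v(1)] A_fin[OF v(1)] card_mono by metis
      then show False using B(2) t3 by simp
    next
      case False
      then have BXY: "B \<subseteq> Xs \<union> y ` J" using B(1) unfolding M_def sig_def by blast
      then have BVS: "B \<subseteq> V - S" using Xs_VS y_VS J by blast
      have finj: "inj_on f B" using bij BVS unfolding bij_betw_def by (meson inj_on_subset)
      have cfB: "card (f ` B) = t" using card_image[OF finj] B(2) by simp
      have cl: "\<And>p q. p \<in> f ` B \<Longrightarrow> q \<in> f ` B \<Longrightarrow> p \<noteq> q \<Longrightarrow> {p,q} \<in> Gnt_E n t"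
      proof -
        fix p q assume "p \<in> f ` B" "q \<in> f ` B" "p \<noteq> q"
        then obtain a b where ab: "a \<in> B" "b \<in> B" "p = f a" "q = f b" "a \<noteq> b" by blast
        then have "{a,b} \<in> E'" using B(3) unfolding is_clique_def by blast
        then show "{p,q} \<in> Gnt_E n t" using edge_VS ab BVS by blast
      qed
      have fimg: "\<And>b. b \<in> B \<Longrightarrow> f b \<in> XI \<or> (\<exists>k\<in>J. f b = (k,0))"
        using BXY f_Xs f_y J by blast
      show False
      proof (cases "\<exists>p\<in>f ` B. snd p \<noteq> 0")
        case True
        then obtain p where p: "p \<in> f ` B" "snd p \<noteq> 0" by blast
        obtain i j where "p = (i,j)" by (cases p)
        then have ij: "(i,j) \<in> f ` B" "j \<noteq> 0" using p by auto
        then have ijXI: "(i,j) \<in> XI" using fimg by fastforce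
        then have i: "i < n" and j: "1 \<le> j" "j \<le> t - 2" unfolding XI_def by auto
        have "f ` B \<subseteq> Gnt_block n t i"
        proof
          fix q assume q: "q \<in> f ` B"
          show "q \<in> Gnt_block n t i"
          proof (cases "q = (i,j)")
            case True then show ?thesis using i j unfolding Gnt_block_def by auto
          next
            case False then show ?thesis using cl[OF ij(1) q] x_edge j by auto
          qed
        qed
        then have eqb: "f ` B = Gnt_block n t i"
          using card_subset_eq[of "Gnt_block n t i" "f ` B"] block_card[OF i] cfB
          by (metis card_ge_0_finite t3 le_less_trans zero_less_numeral card.infinite not_less zero_less_iff_neq_zero)
        have inJ: "k \<in> J" if kB: "(k,0) \<in> f ` B" for k
        proof -
          from kB obtain b where b: "b \<in> B" "(k,0) = f b" by (rule imageE)
          then show "k \<in> J" using fimg[OF b(1)] unfolding XI_def by auto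
        qed
        have "i \<in> J" using inJ eqb unfolding Gnt_block_def by auto
        moreover have "(i+1) mod n \<in> J" using inJ eqb unfolding Gnt_block_def by auto
        ultimately show False using nc by blast
      next
        case False
        then have "f ` B \<subseteq> (\<lambda>k. (k,0)) ` J" using fimg unfolding XI_def by force
        moreover have finJ: "finite J" using J finite_subset by blast
        ultimately have "card (f ` B) \<le> card ((\<lambda>k. (k,0::nat)) ` J)" by (intro card_mono) auto
        also have "\<dots> \<le> card J" using card_image_le[OF finJ] by blast
        finally have "card (f ` B) \<le> card J" .
        then show False using cfB cJ by simp
      qed
    qed
  qed
  then show ?thesis unfolding Dl_def CF_def using M_V'[OF J] by blast
qed

end

lemma modne: "a < b \<Longrightarrow> b < a + n \<Longrightarrow> a mod n \<noteq> (b::nat) mod n"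
proof
  assume ab: "a < b" "b < a + n" "a mod n = b mod n"
  then have "n dvd (b - a)" using mod_eq_dvd_iff_nat[of a b n] by simp
  moreover have "0 < b - a" "b - a < n" using ab by auto
  ultimately show False using dvd_imp_le by fastforce
qed

lemma pred_succ: "0 < n \<Longrightarrow> u < n \<Longrightarrow> ((u+n-1) mod n + 1) mod n = (u::nat)"
proof -
  assume n: "0 < n" "u < n"
  have "((u+n-1) mod n + 1) mod n = (u+n-1+1) mod n" by (rule mod_add_left_eq)
  also have "u+n-1+1 = u + n" using n by simp
  finally show ?thesis using n by simp
qed

context clset begin

lemma facet:
  assumes J: "J \<subseteq> {..<n}" and cJ: "card J < t" and nc: "\<And>i. i \<in> J \<Longrightarrow> (i+1) mod n \<notin> J"
    and dom: "\<And>u. u < n \<Longrightarrow> u \<notin> J \<Longrightarrow> (u+1) mod n \<in> J \<or> (u+n-1) mod n \<in> J"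
  shows "M J \<in> facets Dl"
proof -
  have MJ: "M J \<in> Dl" using face[OF J cJ nc] by blast
  have "\<not> (\<exists>G\<in>Dl. M J \<subset> G)"
  proof
    assume "\<exists>G\<in>Dl. M J \<subset> G"
    then obtain G z where G: "G \<in> Dl" "M J \<subseteq> G" "z \<in> G" "z \<notin> M J" by blast
    have sG: "sig \<subseteq> G" using G(2) unfolding M_def by blast
    have "z \<in> y ` {..<n}" using support[OF G(1) sG] G(3) G(4) unfolding M_def by blast
    then obtain u where u: "u < n" "z = y u" by blast
    then have uJ: "u \<notin> J" using G(4) unfolding M_def by blast
    have XG: "Xs \<subseteq> G" using sG unfolding sig_def by blast
    from dom[OF u(1) uJ] show False
    proof
      assume "(u+1) mod n \<in> J"
      then have "y ((u+1) mod n) \<in> G" using G(2) unfolding M_def by blast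
      then show False using consec_nonface[OF G(1) u(1) XG] G(3) u(2) by blast
    next
      assume a: "(u+n-1) mod n \<in> J"
      then have "y ((u+n-1) mod n) \<in> G" using G(2) unfolding M_def by blast
      moreover have "(u+n-1) mod n < n" using npos by simp
      moreover have "y (((u+n-1) mod n + 1) mod n) \<in> G" using pred_succ[OF npos u(1)] G(3) u(2) by simp
      ultimately show False using consec_nonface[OF G(1) _ XG] by blast
    qed
  qed
  then show ?thesis unfolding facets_def using MJ by blast
qed

lemma facet_sup: "F \<in> facets Dl \<Longrightarrow> G \<in> Dl \<Longrightarrow> F \<subseteq> G \<Longrightarrow> G = F"
  unfolding facets_def by blast

lemma witness:
  assumes J: "J \<subseteq> {..<n}" and MJ: "M J \<in> Dl" and v: "v \<in> M J" "v \<notin> sig"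
    and G: "G \<in> facets Dl" and diff: "M J - G = {v}"
  shows "\<exists>w0\<in>J. v = y w0 \<and> (\<exists>u<n. u \<notin> J \<and> y u \<in> G) \<and> sig \<subseteq> G \<and> G \<in> Dl
           \<and> (\<forall>w\<in>J. w \<noteq> w0 \<longrightarrow> y w \<in> G)"
proof -
  have inG: "x \<in> G" if "x \<in> M J" "x \<noteq> v" for x
  proof (rule ccontr)
    assume "x \<notin> G"
    then have "x \<in> M J - G" using that by simp
    then show False using diff that(2) by simp
  qed
  have vG: "v \<notin> G" using diff by auto
  have "v \<in> y ` J" using v unfolding M_def by simp
  then obtain w0 where w0: "w0 \<in> J" "v = y w0" by auto
  have GD: "G \<in> Dl" using G unfolding facets_def by simp
  have sG: "sig \<subseteq> G"
  proof
    fix x assume "x \<in> sig"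
    then have "x \<in> M J" "x \<noteq> v" using v(2) unfolding M_def by auto
    then show "x \<in> G" by (rule inG)
  qed
  have oth: "\<forall>w\<in>J. w \<noteq> w0 \<longrightarrow> y w \<in> G"
  proof (intro ballI impI)
    fix w assume wJ: "w \<in> J" and ww: "w \<noteq> w0"
    then have "w < n" "w0 < n" using J w0 by auto
    then have "y w \<noteq> v" using w0 y_inj ww by metis
    moreover have "y w \<in> M J" using wJ unfolding M_def by simp
    ultimately show "y w \<in> G" using inG by simp
  qed
  have "\<not> G \<subseteq> M J"
  proof
    assume sub: "G \<subseteq> M J"
    have "G \<noteq> M J" using vG v(1) by auto
    then have "G \<subset> M J" using sub by auto
    then show False using G MJ unfolding facets_def by auto
  qed
  then obtain z where z: "z \<in> G" "z \<notin> M J" by auto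
  then have "z \<in> sig \<union> y ` {..<n}" using support[OF GD sG] by auto
  then have "z \<in> y ` {..<n}" using z(2) unfolding M_def by auto
  then obtain u where u: "u < n" "z = y u" by auto
  then have "u \<notin> J" using z unfolding M_def by auto
  then have "\<exists>u<n. u \<notin> J \<and> y u \<in> G" using u z by auto
  then show ?thesis using w0 sG GD oth by (intro bexI[of _ w0]) auto
qed

end

context clset begin

lemma shell_data:
  assumes "shellable Dl"
  obtains Fs where "distinct Fs" "set Fs = facets Dl"
    "\<And>i j. i < j \<Longrightarrow> j < length Fs \<Longrightarrow> (\<exists>v \<in> Fs ! j - Fs ! i. \<exists>l < j. Fs ! j - Fs ! l = {v})"
  using assms unfolding shellable_def by blast

lemma even_case:
  assumes ev: "even n" and n4: "n \<ge> 4" and tn: "n div 2 < t" and sh: "shellable Dl"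
  shows False
proof -
  define Jp where "Jp p = {j. j < n \<and> j mod 2 = p}" for p :: nat
  have par: "\<And>a. (a mod n) mod 2 = a mod 2" using ev by (simp add: mod_mod_cancel)
  have Jsub: "Jp p \<subseteq> {..<n}" for p unfolding Jp_def by auto
  have Jcard: "card (Jp p) < t" for p
  proof -
    have "Jp p \<subseteq> (\<lambda>b. 2*b + p) ` {..<n div 2}"
    proof
      fix j assume "j \<in> Jp p"
      then have j: "j < n" "j mod 2 = p" unfolding Jp_def by auto
      then have "j = 2*(j div 2) + p" using div_mult_mod_eq[of j 2] by simp
      moreover have "j div 2 < n div 2" using j ev by (auto elim!: evenE)
      ultimately show "j \<in> (\<lambda>b. 2*b + p) ` {..<n div 2}" by blast
    qed
    then have "card (Jp p) \<le> card ((\<lambda>b. 2*b + p) ` {..<n div 2})" by (intro card_mono) auto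
    also have "\<dots> \<le> n div 2" using card_image_le[of "{..<n div 2}"] by simp
    finally show ?thesis using tn by simp
  qed
  have Jnc: "(i+1) mod n \<notin> Jp p" if "i \<in> Jp p" for i p
  proof -
    have "(i+1) mod 2 \<noteq> i mod 2" by presburger
    then show ?thesis using that par[of "i+1"] unfolding Jp_def by auto
  qed
  have Jdom: "(u+1) mod n \<in> Jp p" if "u < n" "u \<notin> Jp p" "p < 2" for u p
  proof -
    have "u mod 2 \<noteq> p" using that unfolding Jp_def by auto
    then have "(u+1) mod 2 = p" using that(3) by presburger
    then show ?thesis using par[of "u+1"] npos unfolding Jp_def by auto
  qed
  have Jdom2: "(u+n-1) mod n \<in> Jp p" if "u < n" "u \<notin> Jp p" "p < 2" for u p
  proof -
    have "u mod 2 \<noteq> p" using that unfolding Jp_def by auto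
    then have up: "(u+1) mod 2 = p" using that(3) by presburger
    obtain k where k: "n = 2*k" using ev by (auto elim!: evenE)
    then have "u+n-1 = (u+1) + 2*(k-1)" using n4 by simp
    then have "(u+n-1) mod 2 = (u+1) mod 2" by simp
    then have "(u+n-1) mod 2 = p" using up by simp
    then show ?thesis using par[of "u+n-1"] npos unfolding Jp_def by auto
  qed
  have Jfac: "M (Jp p) \<in> facets Dl" if p2: "p < 2" for p
  proof (rule facet[OF Jsub Jcard])
    fix i assume "i \<in> Jp p" then show "(i+1) mod n \<notin> Jp p" by (rule Jnc)
  next
    fix u assume "u < n" "u \<notin> Jp p"
    then have "(u+1) mod n \<in> Jp p" using Jdom p2 by blast
    then show "(u+1) mod n \<in> Jp p \<or> (u+n-1) mod n \<in> Jp p" by blast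
  qed
  obtain Fs where Fs: "distinct Fs" "set Fs = facets Dl"
    "\<And>i j. i < j \<Longrightarrow> j < length Fs \<Longrightarrow> (\<exists>v \<in> Fs ! j - Fs ! i. \<exists>l < j. Fs ! j - Fs ! l = {v})"
    using shell_data[OF sh] by blast
  have later: False if pq: "p < 2" "q < 2" "p \<noteq> q" and ij: "i < j" "j < length Fs"
      and Fi: "Fs ! i = M (Jp q)" and Fj: "Fs ! j = M (Jp p)" for p q i j
  proof -
    obtain v l where v: "v \<in> Fs ! j" "v \<notin> Fs ! i" and l: "l < j" "Fs ! j - Fs ! l = {v}"
      using Fs(3)[OF ij] by blast
    have vs: "v \<notin> sig" using v Fi unfolding M_def by auto
    have "l < length Fs" using l(1) ij(2) by simp
    then have "Fs ! l \<in> set Fs" by (rule nth_mem)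
    then have Gf: "Fs ! l \<in> facets Dl" using Fs(2) by simp
    have MJ: "M (Jp p) \<in> Dl" using Jfac[OF pq(1)] unfolding facets_def by blast
    have vM: "v \<in> M (Jp p)" using v(1) Fj by simp
    have dM: "M (Jp p) - Fs ! l = {v}" using l(2) Fj by simp
    from witness[OF Jsub MJ vM vs Gf dM] obtain w0 where w0: "w0 \<in> Jp p"
      and rest: "v = y w0 \<and> (\<exists>u<n. u \<notin> Jp p \<and> y u \<in> Fs ! l) \<and> sig \<subseteq> Fs ! l \<and> Fs ! l \<in> Dl
           \<and> (\<forall>w\<in>Jp p. w \<noteq> w0 \<longrightarrow> y w \<in> Fs ! l)" by (elim bexE)
    from rest have sG: "sig \<subseteq> Fs ! l" and GD: "Fs ! l \<in> Dl"
      and oth: "\<forall>w\<in>Jp p. w \<noteq> w0 \<longrightarrow> y w \<in> Fs ! l" by auto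
    from rest obtain u where u: "u < n" "u \<notin> Jp p" "y u \<in> Fs ! l" by auto
    have XG: "Xs \<subseteq> Fs ! l" using sG unfolding sig_def by blast
    have a: "(u+1) mod n \<in> Jp p" using Jdom[OF u(1) u(2) pq(1)] .
    have b: "(u+n-1) mod n \<in> Jp p" using Jdom2[OF u(1) u(2) pq(1)] .
    have ab: "(u+1) mod n \<noteq> (u+n-1) mod n" using modne[of "u+1" "u+n-1" n] n4 by simp
    show False
    proof (cases "(u+1) mod n = w0")
      case False
      then have "y ((u+1) mod n) \<in> Fs ! l" using oth a by blast
      then show False using consec_nonface[OF GD u(1) XG u(3)] by blast
    next
      case True
      then have "(u+n-1) mod n \<noteq> w0" using ab by simp
      then have "y ((u+n-1) mod n) \<in> Fs ! l" using oth b by blast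
      moreover have "y (((u+n-1) mod n + 1) mod n) \<in> Fs ! l" using pred_succ[OF npos u(1)] u(3) by simp
      moreover have "(u+n-1) mod n < n" using npos by simp
      ultimately show False using consec_nonface[OF GD _ XG] by blast
    qed
  qed
  have "M (Jp 0) \<in> set Fs" using Jfac[of 0] Fs(2) by simp
  then obtain i0 where i0: "i0 < length Fs" "Fs ! i0 = M (Jp 0)" by (auto simp: in_set_conv_nth)
  have "M (Jp 1) \<in> set Fs" using Jfac[of 1] Fs(2) by simp
  then obtain i1 where i1: "i1 < length Fs" "Fs ! i1 = M (Jp 1)" by (auto simp: in_set_conv_nth)
  have "0 \<in> Jp 0" "0 \<notin> Jp 1" using npos unfolding Jp_def by auto
  then have "Jp 0 \<noteq> Jp 1" by auto
  then have "M (Jp 0) \<noteq> M (Jp 1)" using M_inj[OF Jsub Jsub] by auto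
  then have "i0 \<noteq> i1" using i0 i1 by auto
  then consider "i0 < i1" | "i1 < i0" by linarith
  then show False
  proof cases
    case 1 then show False using later[of 1 0 i0 i1] i0 i1 by simp
  next
    case 2 then show False using later[of 0 1 i1 i0] i0 i1 by simp
  qed
qed

end

context clset begin

lemma odd_struct:
  assumes n: "n = 2*m+1" and m3: "m \<ge> 3" and s: "s < n"
    and w0: "w0 \<in> Dset n m s" and u: "u < n" "u \<notin> Dset n m s" and G: "G \<in> facets Dl"
    and yu: "y u \<in> G" and sG: "sig \<subseteq> G" and oth: "\<forall>w\<in>Dset n m s. w \<noteq> w0 \<longrightarrow> y w \<in> G"
    and Dfac: "\<And>r. r < n \<Longrightarrow> M (Dset n m r) \<in> facets Dl"
  shows "(w0 = rho n s 0 \<and> G = M (Dset n m ((s+1) mod n))) \<or>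
         (w0 = rho n s (2*m-2) \<and> G = M (Dset n m ((s+n-1) mod n)))"
proof -
  have np: "0 < n" using npos .
  have m2: "2*m \<le> n" using n by simp
  have GD: "G \<in> Dl" using G unfolding facets_def by blast
  have XG: "Xs \<subseteq> G" using sG unfolding sig_def by blast
  obtain c where c: "c < n" "u = rho n s c" using rho_surj[OF np u(1)] by blast
  have cn: "\<not> (even c \<and> c < 2*m)" using u(2) c D_mem[OF np m2 c(1)] by simp
  have inG: "y (rho n s k) \<in> G" if "k < n" "even k" "k < 2*m" "rho n s k \<noteq> w0" for k
    using oth D_mem[OF np m2 that(1)] that by blast
  have rlt: "rho n s k < n" for k using rho_lt[OF np] .
  have succ_bad: "rho n s (c+1) = w0"
    if "c+1 < n" "even (c+1)" "c+1 < 2*m"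
  proof (rule ccontr)
    assume "rho n s (c+1) \<noteq> w0"
    then have "y (rho n s (c+1)) \<in> G" using inG that by blast
    then have "y ((u+1) mod n) \<in> G" using c(2) rho_Suc by simp
    then show False using consec_nonface[OF GD u(1) XG yu] by blast
  qed
  have pred_bad: "rho n s (c-1) = w0"
    if "c \<ge> 1" "even (c-1)" "c-1 < 2*m"
  proof (rule ccontr)
    assume "rho n s (c-1) \<noteq> w0"
    then have "y (rho n s (c-1)) \<in> G" using inG that c(1) by simp
    moreover have "(rho n s (c-1) + 1) mod n = u" using rho_Suc[of n s "c-1"] c(2) that(1) by simp
    ultimately show False using consec_nonface[OF GD rlt XG] yu by metis
  qed
  have w0n: "w0 < n" using w0 D_sub[OF np] by blast
  have "(odd c \<and> c + 3 \<le> 2*m) \<or> c = 2*m - 1 \<or> c = 2*m"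
    using cn c(1) n m3 by presburger
  then consider (odd_small) "odd c" "c + 3 \<le> 2*m" | (c1) "c = 2*m - 1" | (c2) "c = 2*m"
    by blast
  then show ?thesis
  proof cases
    case odd_small
    have A: "rho n s (c+1) = w0" by (rule succ_bad) (use odd_small n in auto)
    have c1: "c \<ge> 1" using odd_pos[OF odd_small(1)] by simp
    have B: "rho n s (c-1) = w0" by (rule pred_bad) (use odd_small n c1 in auto)
    have "rho n s (c+1) = rho n s (c-1)" using A B by simp
    then have "c+1 = c-1" using rho_inj[OF np, of "c+1" "c-1" s] odd_small n by simp
    then show ?thesis using odd_small by simp
  next
    case c1
    have "rho n s (c-1) = w0" by (rule pred_bad) (use c1 m3 n in auto)
    moreover have "c - 1 = 2*m-2" using c1 by simp
    ultimately have w0eq: "w0 = rho n s (2*m-2)" by simp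
    define s' where "s' = (s+n-1) mod n"
    have s'n: "s' < n" using np by (simp add: s'_def)
    have "M (Dset n m s') \<subseteq> G"
    proof
      fix z assume "z \<in> M (Dset n m s')"
      then consider "z \<in> sig" | b where "b < m" "z = y (rho n s' (2*b))" unfolding M_def Dset_def by blast
      then show "z \<in> G"
      proof cases
        case 1 then show ?thesis using sG by blast
      next
        case (2 b)
        show ?thesis
        proof (cases "b = 0")
          case True
          have "rho n s' (2*b) = rho n s (2*m-1)"
            unfolding s'_def rho_mod True by (rule rho_eqI[where j=1]) (use n m3 in simp)
          then show ?thesis using 2 yu c c1 by simp
        next
          case False
          have eq: "rho n s' (2*b) = rho n s (2*(b-1))"
            unfolding s'_def rho_mod by (rule rho_eqI[where j=2]) (use n m3 False in simp)
          have "rho n s (2*(b-1)) \<noteq> w0"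
          proof
            assume "rho n s (2*(b-1)) = w0"
            then have "2*(b-1) = 2*m-2" using rho_inj[OF np, of "2*(b-1)" "2*m-2" s] w0eq 2 n by simp
            then show False using 2 False by simp
          qed
          then have "y (rho n s (2*(b-1))) \<in> G" using inG[of "2*(b-1)"] 2 n by simp
          then show ?thesis using 2 eq by simp
        qed
      qed
    qed
    then have "G = M (Dset n m s')" using facet_sup[OF Dfac[OF s'n] GD] by blast
    then show ?thesis using w0eq s'_def by simp
  next
    case c2
    have "rho n s (c+1) = rho n s 0" using c2 n rho_n[of n s 0] by simp
    moreover have "rho n s 0 \<noteq> w0 \<Longrightarrow> False"
    proof -
      assume "rho n s 0 \<noteq> w0"
      then have "y (rho n s 0) \<in> G" using inG[of 0] m3 np by simp
      then have "y ((u+1) mod n) \<in> G" using c(2) rho_Suc c2 n rho_n[of n s 0] by simp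
      then show False using consec_nonface[OF GD u(1) XG yu] by blast
    qed
    ultimately have w0eq: "w0 = rho n s 0" by blast
    define s' where "s' = (s+1) mod n"
    have s'n: "s' < n" using np by (simp add: s'_def)
    have "M (Dset n m s') \<subseteq> G"
    proof
      fix z assume "z \<in> M (Dset n m s')"
      then consider "z \<in> sig" | b where "b < m" "z = y (rho n s' (2*b))" unfolding M_def Dset_def by blast
      then show "z \<in> G"
      proof cases
        case 1 then show ?thesis using sG by blast
      next
        case (2 b)
        have eq: "rho n s' (2*b) = rho n s (2*(b+1))"
          unfolding s'_def rho_mod by (rule rho_eqI[where j=0]) simp
        show ?thesis
        proof (cases "b+1 = m")
          case True
          then show ?thesis using eq 2 yu c c2 by simp
        next
          case False
          have "rho n s (2*(b+1)) \<noteq> w0"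
          proof
            assume "rho n s (2*(b+1)) = w0"
            then have "2*(b+1) = 0" using rho_inj[OF np, of "2*(b+1)" 0 s] w0eq 2 n by simp
            then show False by simp
          qed
          then have "y (rho n s (2*(b+1))) \<in> G" using inG[of "2*(b+1)"] 2 n False by simp
          then show ?thesis using 2 eq by simp
        qed
      qed
    qed
    then have "G = M (Dset n m s')" using facet_sup[OF Dfac[OF s'n] GD] by blast
    then show ?thesis using w0eq s'_def by simp
  qed
qed

end

context clset begin

lemma odd_case:
  assumes n: "n = 2*m+1" and m3: "m \<ge> 3" and mt: "m < t" and sh: "shellable Dl"
  shows False
proof -
  have np: "0 < n" using npos .
  have m2: "2*m \<le> n" using n by simp
  define D where "D r = Dset n m r" for r
  have Dsub: "D r \<subseteq> {..<n}" for r unfolding D_def using D_sub[OF np] .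
  have Dcard: "card (D r) < t" for r unfolding D_def using D_card[of n m r] mt by simp
  have Dnc: "(i+1) mod n \<notin> D r" if iD: "i \<in> D r" for i r
  proof -
    obtain b where b: "b < m" "i = rho n r (2*b)" using iD unfolding D_def Dset_def by blast
    then have "(i+1) mod n = rho n r (2*b+1)" using rho_Suc by simp
    moreover have "2*b+1 < n" using b n by simp
    ultimately show ?thesis using D_mem[OF np m2, of "2*b+1" r] unfolding D_def by simp
  qed
  have Ddom: "(u+1) mod n \<in> D r \<or> (u+n-1) mod n \<in> D r" if uu: "u < n" "u \<notin> D r" for u r
  proof -
    obtain c where c: "c < n" "u = rho n r c" using rho_surj[OF np uu(1)] by blast
    have cn: "\<not> (even c \<and> c < 2*m)" using uu(2) c D_mem[OF np m2 c(1)] unfolding D_def by simp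
    show ?thesis
    proof (cases "even c")
      case True
      then have "c = 2*m" using cn c(1) n by simp
      then have "(u+1) mod n = rho n r (0 + n)" using c rho_Suc n by simp
      also have "\<dots> = rho n r (2*0)" using rho_n[of n r 0] by simp
      finally have "(u+1) mod n \<in> D r" using rho_in[of 0 m n r] m3 unfolding D_def by simp
      then show ?thesis by blast
    next
      case False
      then have c1: "c \<ge> 1" using odd_pos by fastforce
      have "(u+n-1) mod n = rho n r (c + n - 1)" using c rho_pred[OF np] by simp
      also have "c + n - 1 = (c - 1) + n" using c1 by simp
      also have "rho n r ((c-1) + n) = rho n r (c-1)" by (rule rho_n)
      finally have "(u+n-1) mod n = rho n r (c-1)" .
      moreover have "even (c-1)" "c - 1 < 2*m" using False c1 c(1) n by auto
      ultimately have "(u+n-1) mod n \<in> D r" using D_mem[OF np m2, of "c-1" r] c(1) unfolding D_def by simp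
      then show ?thesis by blast
    qed
  qed
  have Dfac: "M (D r) \<in> facets Dl" for r
  proof (rule facet[OF Dsub Dcard])
    fix i assume "i \<in> D r" then show "(i+1) mod n \<notin> D r" by (rule Dnc)
  next
    fix u assume "u < n" "u \<notin> D r" then show "(u+1) mod n \<in> D r \<or> (u+n-1) mod n \<in> D r" by (rule Ddom)
  qed
  obtain Fs where Fs: "distinct Fs" "set Fs = facets Dl"
    "\<And>i j. i < j \<Longrightarrow> j < length Fs \<Longrightarrow> (\<exists>v \<in> Fs ! j - Fs ! i. \<exists>l < j. Fs ! j - Fs ! l = {v})"
    using sh unfolding shellable_def by blast
  define pos where "pos s = (SOME i. i < length Fs \<and> Fs ! i = M (D s))" for s
  have pos: "pos s < length Fs \<and> Fs ! pos s = M (D s)" for s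
  proof -
    have "M (D s) \<in> set Fs" using Dfac Fs(2) by simp
    then have "\<exists>i. i < length Fs \<and> Fs ! i = M (D s)" by (simp add: in_set_conv_nth)
    then show ?thesis unfolding pos_def by (rule someI_ex)
  qed
  have idx: "l = pos s" if "l < length Fs" "Fs ! l = M (D s)" for l s
    using pos[of s] that Fs(1) nth_eq_iff_index_eq by metis
  have inj: "inj_on pos {..<n}"
  proof (rule inj_onI)
    fix r s assume rs: "r \<in> {..<n}" "s \<in> {..<n}" "pos r = pos s"
    then have "M (D r) = M (D s)" using pos[of r] pos[of s] by metis
    then have "D r = D s" using M_inj[OF Dsub Dsub] by blast
    then show "r = s" using D_inj[OF n, of r s] rs m3 unfolding D_def by simp
  qed
  obtain s0 where s0: "s0 < n" "\<forall>s<n. pos s0 \<le> pos s"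
  proof -
    have fin: "finite (pos ` {..<n})" "pos ` {..<n} \<noteq> {}" using np by auto
    have "Min (pos ` {..<n}) \<in> pos ` {..<n}" using Min_in[OF fin] .
    then obtain s0 where "s0 \<in> {..<n}" "Min (pos ` {..<n}) = pos s0" by (rule imageE)
    then have "s0 < n" "pos s0 = Min (pos ` {..<n})" by auto
    moreover have "\<forall>s<n. Min (pos ` {..<n}) \<le> pos s" using Min_le[OF fin(1)] by auto
    ultimately show ?thesis using that by metis
  qed
  have cons: "(rho n s 0 \<notin> Dset n m r \<and> pos ((s+1) mod n) < pos s) \<or>
       (rho n s (2*m-2) \<notin> Dset n m r \<and> pos ((s+n-1) mod n) < pos s)"
    if rs: "r < n" "s < n" "pos r < pos s" for r s
  proof -
    obtain v l where v: "v \<in> Fs ! pos s" "v \<notin> Fs ! pos r" and l: "l < pos s" "Fs ! pos s - Fs ! l = {v}"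
      using Fs(3)[OF rs(3)] pos[of s] by blast
    have vM: "v \<in> M (D s)" "v \<notin> M (D r)" using v pos by auto
    have vs: "v \<notin> sig" using vM(2) unfolding M_def by blast
    have ll: "l < length Fs" using l(1) pos[of s] by simp
    then have "Fs ! l \<in> set Fs" by (rule nth_mem)
    then have Gf: "Fs ! l \<in> facets Dl" using Fs(2) by simp
    have MD: "M (D s) \<in> Dl" using Dfac unfolding facets_def by blast
    have dM: "M (D s) - Fs ! l = {v}" using l(2) pos[of s] by simp
    from witness[OF Dsub MD vM(1) vs Gf dM] obtain w0 where w0: "w0 \<in> D s"
      and rest: "v = y w0 \<and> (\<exists>u<n. u \<notin> D s \<and> y u \<in> Fs ! l) \<and> sig \<subseteq> Fs ! l \<and> Fs ! l \<in> Dl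
           \<and> (\<forall>w\<in>D s. w \<noteq> w0 \<longrightarrow> y w \<in> Fs ! l)" by (elim bexE)
    from rest have vy: "v = y w0" and sG: "sig \<subseteq> Fs ! l"
      and oth: "\<forall>w\<in>D s. w \<noteq> w0 \<longrightarrow> y w \<in> Fs ! l" by auto
    from rest obtain u where u: "u < n" "u \<notin> D s" "y u \<in> Fs ! l" by auto
    have w0r: "w0 \<notin> D r" using vM(2) vy unfolding M_def by auto
    have st: "(w0 = rho n s 0 \<and> Fs ! l = M (Dset n m ((s+1) mod n))) \<or>
         (w0 = rho n s (2*m-2) \<and> Fs ! l = M (Dset n m ((s+n-1) mod n)))"
      using odd_struct[OF n m3 rs(2), of w0 u "Fs ! l"] w0 u Gf sG oth Dfac unfolding D_def by blast
    then show ?thesis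
    proof
      assume a: "w0 = rho n s 0 \<and> Fs ! l = M (Dset n m ((s+1) mod n))"
      then have "l = pos ((s+1) mod n)" using idx[OF ll] unfolding D_def by blast
      then show ?thesis using a w0r l(1) unfolding D_def by blast
    next
      assume a: "w0 = rho n s (2*m-2) \<and> Fs ! l = M (Dset n m ((s+n-1) mod n))"
      then have "l = pos ((s+n-1) mod n)" using idx[OF ll] unfolding D_def by blast
      then show ?thesis using a w0r l(1) unfolding D_def by blast
    qed
  qed
  show False by (rule arc_core[OF n m3 inj s0 cons])
qed

end

theorem corollary4p5:
  fixes V :: "'a set" and E :: "'a set set" and S :: "'a set" and t n :: nat
    and V' :: "'a set" and E' :: "'a set set"
  assumes "simple_graph V E" and "S \<subseteq> V" and "t \<ge> 3"
    and "graph_iso (V - S) (del_edges S E) (Gnt_V n t) (Gnt_E n t)"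
    and "n \<ge> 3" and "n \<noteq> 3" and "n \<noteq> 5" and "t > (n + 1) div 2"
    and "is_Cl V E S t V' E'"
  shows "\<not> shellable (CF t V' E')"
proof
  assume sh: "shellable (CF t V' E')"
  from assms(4) obtain f where bij: "bij_betw f (V - S) (Gnt_V n t)"
    and iso: "\<forall>u\<in>V-S. \<forall>v\<in>V-S. {u,v} \<in> del_edges S E \<longleftrightarrow> {f u, f v} \<in> Gnt_E n t"
    unfolding graph_iso_def by blast
  from assms(9) obtain K where
    K1: "\<forall>v\<in>S. v \<in> K v \<and> finite (K v) \<and> card (K v) \<ge> t \<and> K v \<inter> V = {v}"
    and K2: "\<forall>u\<in>S. \<forall>v\<in>S. u \<noteq> v \<longrightarrow> K u \<inter> K v = {}"
    and V'def: "V' = V \<union> (\<Union>v\<in>S. K v)"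
    and E'def: "E' = E \<union> (\<Union>v\<in>S. two_sets (K v))"
    unfolding is_Cl_def by blast
  have "\<forall>v\<in>S. \<exists>B. B \<subseteq> K v - {v} \<and> card B = t - 1"
  proof
    fix v assume v: "v \<in> S"
    then have "card (K v - {v}) = card (K v) - 1" using K1 by simp
    moreover have "t \<le> card (K v)" using K1 v by blast
    ultimately have "t - 1 \<le> card (K v - {v})" by simp
    then obtain B where "B \<subseteq> K v - {v}" "card B = t - 1" by (rule obtain_subset_with_card_n)
    then show "\<exists>B. B \<subseteq> K v - {v} \<and> card B = t - 1" by blast
  qed
  then obtain A where A1: "\<forall>v\<in>S. A v \<subseteq> K v - {v} \<and> card (A v) = t - 1" by metis
  interpret C: clset V E S t n V' E' K f A
    by (unfold_locales; (rule assms bij iso K1 K2 V'def E'def A1)?)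
  have shD: "shellable C.Dl" using sh unfolding C.Dl_def .
  show False
  proof (cases "even n")
    case True
    have "n \<ge> 4" using assms(5,6) by simp
    moreover have "n div 2 < t" using assms(8) True by (auto elim!: evenE)
    ultimately show False using C.even_case[OF True _ _ shD] by blast
  next
    case False
    define m where "m = n div 2"
    have nm: "n = 2*m+1" using False unfolding m_def by presburger
    have "m \<ge> 3" using assms(5,6,7) nm by presburger
    moreover have "m < t" using assms(8) nm by simp
    ultimately show False using C.odd_case[OF nm _ _ shD] by blast
  qed
qed

end
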